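(* There exist connected graphs $G$ and $H$ that have no non-trivial common factor (i.e., there is no non-trivial graph $K$ with $K\mid G$ and $K\mid H$) and yet are not weakly disjoint.
   Context: A weight function on finite $U$ is $\alpha:U\times U\to\mathbb{R}$, $\alpha\ge0$, symmetric, summing to $1$; degree $p(u)=\sum_{u'}\alpha(u,u')$; a graph is $(U,\alpha)$ (self-loops allowed); connected means any two distinct vertices are joined by a path of edges $(u,u')$ with $\alpha(u,u')>0$; non-trivial means at least two vertices have positive degree. For graphs $G=(U,\alpha)$, $H=(V,\beta)$ with degrees $p,q$, $H\mid G$ means there is a surjective $\phi:U\to V$ with (i) $q(v)=\sum_{u\in\phi^{-1}(v)}p(u)$ for all $v$, and (ii) $q(v)\sum_{u'\in\phi^{-1}(v')}\alpha(u,u')=p(u)\beta(v,v')$ for all $v,v'$, $u\in\phi^{-1}(v)$. A weight joining of $\alpha,\beta$ is a weight function $\gamma$ on $U\times V$ with degree $r(u,v)=\sum_{(u',v')}\gamma((u,v),(u',v'))$ such that $\sum_v r(u,v)=p(u)$, $\sum_u r(u,v)=q(v)$, $p(u)\sum_{\tilde v}\gamma((u,v),(u',\tilde v))=\alpha(u,u')r(u,v)$ and $q(v)\sum_{\tilde u}\gamma((u,v),(\tilde u,v'))=\beta(v,v')r(u,v)$. $G,H$ are weakly disjoint if every weight joining has degree $r(u,v)=p(u)q(v)$. *)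

theory Defs
  imports Complex_Main
begin

text \<open>A graph is a finite vertex set U with a weight function alpha (only its values on U x U matter).\<close>

definition weight_fun :: "'a set \<Rightarrow> ('a \<Rightarrow> 'a \<Rightarrow> real) \<Rightarrow> bool" where
  "weight_fun U \<alpha> \<longleftrightarrow> finite U \<and>
     (\<forall>u\<in>U. \<forall>u'\<in>U. 0 \<le> \<alpha> u u' \<and> \<alpha> u u' = \<alpha> u' u) \<and>
     (\<Sum>u\<in>U. \<Sum>u'\<in>U. \<alpha> u u') = 1"

definition degree :: "'a set \<Rightarrow> ('a \<Rightarrow> 'a \<Rightarrow> real) \<Rightarrow> 'a \<Rightarrow> real" where
  "degree U \<alpha> u = (\<Sum>u'\<in>U. \<alpha> u u')"

definition graph_connected :: "'a set \<Rightarrow> ('a \<Rightarrow> 'a \<Rightarrow> real) \<Rightarrow> bool" where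
  "graph_connected U \<alpha> \<longleftrightarrow>
     (\<forall>u\<in>U. \<forall>u'\<in>U. u \<noteq> u' \<longrightarrow> (\<lambda>x y. x \<in> U \<and> y \<in> U \<and> \<alpha> x y > 0)\<^sup>*\<^sup>* u u')"

definition nontrivial_graph :: "'a set \<Rightarrow> ('a \<Rightarrow> 'a \<Rightarrow> real) \<Rightarrow> bool" where
  "nontrivial_graph U \<alpha> \<longleftrightarrow> (\<exists>u\<in>U. \<exists>u'\<in>U. u \<noteq> u' \<and> degree U \<alpha> u > 0 \<and> degree U \<alpha> u' > 0)"

text \<open>graph_factor V beta U alpha means (V,beta) divides (U,alpha).\<close>
definition graph_factor :: "'b set \<Rightarrow> ('b \<Rightarrow> 'b \<Rightarrow> real) \<Rightarrow> 'a set \<Rightarrow> ('a \<Rightarrow> 'a \<Rightarrow> real) \<Rightarrow> bool" where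
  "graph_factor V \<beta> U \<alpha> \<longleftrightarrow> (\<exists>\<phi>. \<phi> ` U = V \<and>
     (\<forall>v\<in>V. degree V \<beta> v = (\<Sum>u\<in>{u\<in>U. \<phi> u = v}. degree U \<alpha> u)) \<and>
     (\<forall>v\<in>V. \<forall>v'\<in>V. \<forall>u\<in>U. \<phi> u = v \<longrightarrow>
        degree V \<beta> v * (\<Sum>u'\<in>{u'\<in>U. \<phi> u' = v'}. \<alpha> u u') = degree U \<alpha> u * \<beta> v v'))"

definition weight_joining :: "'a set \<Rightarrow> ('a \<Rightarrow> 'a \<Rightarrow> real) \<Rightarrow> 'b set \<Rightarrow> ('b \<Rightarrow> 'b \<Rightarrow> real)
    \<Rightarrow> ('a \<times> 'b \<Rightarrow> 'a \<times> 'b \<Rightarrow> real) \<Rightarrow> bool" where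
  "weight_joining U \<alpha> V \<beta> \<gamma> \<longleftrightarrow> weight_fun (U \<times> V) \<gamma> \<and>
     (\<forall>u\<in>U. (\<Sum>v\<in>V. degree (U \<times> V) \<gamma> (u, v)) = degree U \<alpha> u) \<and>
     (\<forall>v\<in>V. (\<Sum>u\<in>U. degree (U \<times> V) \<gamma> (u, v)) = degree V \<beta> v) \<and>
     (\<forall>u\<in>U. \<forall>v\<in>V. \<forall>u'\<in>U.
        degree U \<alpha> u * (\<Sum>v'\<in>V. \<gamma> (u, v) (u', v')) = \<alpha> u u' * degree (U \<times> V) \<gamma> (u, v)) \<and>
     (\<forall>u\<in>U. \<forall>v\<in>V. \<forall>v'\<in>V.
        degree V \<beta> v * (\<Sum>u'\<in>U. \<gamma> (u, v) (u', v')) = \<beta> v v' * degree (U \<times> V) \<gamma> (u, v))"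

definition weakly_disjoint :: "'a set \<Rightarrow> ('a \<Rightarrow> 'a \<Rightarrow> real) \<Rightarrow> 'b set \<Rightarrow> ('b \<Rightarrow> 'b \<Rightarrow> real) \<Rightarrow> bool" where
  "weakly_disjoint U \<alpha> V \<beta> \<longleftrightarrow> (\<forall>\<gamma>. weight_joining U \<alpha> V \<beta> \<gamma> \<longrightarrow>
     (\<forall>u\<in>U. \<forall>v\<in>V. degree (U \<times> V) \<gamma> (u, v) = degree U \<alpha> u * degree V \<beta> v))"

end

theory Submission
  imports Defs
begin

definition aG :: "nat \<Rightarrow> nat \<Rightarrow> real" where
  "aG x y = (if x = y then 21/60 else 9/60)"

definition bH :: "nat \<Rightarrow> nat \<Rightarrow> real" where
  "bH x y = (if x = 0 \<and> y = 0 then 5/60 else if x = 1 \<and> y = 1 then 45/60 else 5/60)"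

definition wJ :: "nat \<Rightarrow> real" where
  "wJ i = (if i = 0 then 5/60 else if i = 1 then 12/60 else 21/60)"

definition idx :: "nat \<times> nat \<Rightarrow> nat" where
  "idx z = (if z = (0,0) then 0 else if z = (0,1) then 1 else if z = (1,1) then 2 else 3)"

definition gJ :: "nat \<times> nat \<Rightarrow> nat \<times> nat \<Rightarrow> real" where
  "gJ z z' = (let i = idx z; j = idx z' in
     if i = 3 \<or> j = 3 then 0
     else if i = j then wJ i
     else if i + j = 1 then 2/60
     else if i + j = 2 then 3/60
     else 6/60)"

lemma prod01: "({0,1} :: nat set) \<times> ({0,1} :: nat set) = {(0,0),(0,1),(1,0),(1,1)}"
  by auto

lemma sum01: "(\<Sum>x\<in>({0,1}::nat set). f x) = f 0 + f 1"
  by simp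

lemma sum4: "(\<Sum>x\<in>{(0,0),(0,1),(1,0),(1,1)}. f x) = f (0::nat,0::nat) + f (0,1) + f (1,0) + f (1,1)"
  by (simp add: insert_commute add.assoc)

lemma all01: "(\<forall>x\<in>({0,1}::nat set). P x) = (P 0 \<and> P 1)"
  by simp

lemma all4: "(\<forall>x\<in>{(0::nat,0::nat),(0,1),(1,0),(1,1)}. P x) = (P (0,0) \<and> P (0,1) \<and> P (1,0) \<and> P (1,1))"
  by simp

lemma degG: "degree {0,1} aG 0 = 1/2" "degree {0,1} aG 1 = 1/2"
  by (simp_all add: degree_def aG_def)

lemma degH: "degree {0,1} bH 0 = 1/6" "degree {0,1} bH 1 = 5/6"
  by (simp_all add: degree_def bH_def)

lemma degS: "degree {0, Suc 0} aG 0 = 1/2" "degree {0, Suc 0} aG (Suc 0) = 1/2"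
  "degree {0, Suc 0} bH 0 = 1/6" "degree {0, Suc 0} bH (Suc 0) = 5/6"
  by (simp_all add: degree_def aG_def bH_def)

lemma joining: "weight_joining {0,1} aG {0,1} bH gJ"
  unfolding weight_joining_def weight_fun_def prod01 degree_def
  by (simp add: sum4 all4 aG_def bH_def gJ_def idx_def wJ_def insert_commute)

lemma preimg_cases:
  fixes S :: "nat set"
  assumes "S \<subseteq> {0,1}"
  shows "S = {} \<or> S = {0} \<or> S = {1} \<or> S = {0,1}"
  using assms by auto

lemma no_common:
  fixes W :: "nat set"
  assumes W: "nontrivial_graph W \<kappa>"
    and fG: "graph_factor W \<kappa> {0,1} aG" and fH: "graph_factor W \<kappa> {0,1} bH"
  shows False
proof -
  obtain \<phi> where p1: "\<phi> ` {0,1} = W"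
    and p2: "\<forall>v\<in>W. degree W \<kappa> v = (\<Sum>u\<in>{u\<in>{0,1}. \<phi> u = v}. degree {0,1} aG u)"
    using fG unfolding graph_factor_def by blast
  obtain \<psi> where q2: "\<forall>v\<in>W. degree W \<kappa> v = (\<Sum>u\<in>{u\<in>{0,1}. \<psi> u = v}. degree {0,1} bH u)"
    using fH unfolding graph_factor_def by blast
  have key: "degree W \<kappa> v = 0 \<or> (degree W \<kappa> v = 1 \<and> \<phi> 0 = v \<and> \<phi> 1 = v)" if "v \<in> W" for v
  proof -
    have a: "{u\<in>{0::nat,1}. \<phi> u = v} \<subseteq> {0,1}" "{u\<in>{0::nat,1}. \<psi> u = v} \<subseteq> {0,1}" by auto
    have e1: "degree W \<kappa> v = (\<Sum>u\<in>{u\<in>{0,1}. \<phi> u = v}. degree {0,1} aG u)" using p2 that by blast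
    have e2: "degree W \<kappa> v = (\<Sum>u\<in>{u\<in>{0,1}. \<psi> u = v}. degree {0,1} bH u)" using q2 that by blast
    have s: "{u\<in>{0::nat,1}. f u = v} = (if f 0 = v then {0} else {}) \<union> (if f 1 = v then {1} else {})" for f :: "nat \<Rightarrow> nat"
      by (rule set_eqI, case_tac "x = 0"; case_tac "x = 1"; auto)
    show ?thesis
      using e1 e2 unfolding s
      by (cases "\<phi> 0 = v"; cases "\<phi> 1 = v"; cases "\<psi> 0 = v"; cases "\<psi> 1 = v") (simp_all add: degG degH degS)
  qed
  from W obtain w w' where h: "w \<in> W" "w' \<in> W" "w \<noteq> w'" "degree W \<kappa> w > 0" "degree W \<kappa> w' > 0"
    unfolding nontrivial_graph_def by blast
  have "\<phi> 0 = w" using key[OF h(1)] h(4) by auto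
  moreover have "\<phi> 0 = w'" using key[OF h(2)] h(5) by auto
  ultimately show False using h(3) by simp
qed

theorem proposition4p8:
  shows "\<exists>(U :: nat set) \<alpha> (V :: nat set) \<beta>.
    weight_fun U \<alpha> \<and> weight_fun V \<beta> \<and>
    graph_connected U \<alpha> \<and> graph_connected V \<beta> \<and>
    \<not> (\<exists>(W :: nat set) \<kappa>. weight_fun W \<kappa> \<and> nontrivial_graph W \<kappa> \<and>
          graph_factor W \<kappa> U \<alpha> \<and> graph_factor W \<kappa> V \<beta>) \<and>
    \<not> weakly_disjoint U \<alpha> V \<beta>"
proof (intro exI conjI)
  show "weight_fun {0,1} aG" by (simp add: weight_fun_def aG_def)
  show "weight_fun {0,1} bH" by (simp add: weight_fun_def bH_def)
  show "graph_connected {0,1} aG"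
    unfolding graph_connected_def by (auto simp: aG_def intro!: r_into_rtranclp)
  show "graph_connected {0,1} bH"
    unfolding graph_connected_def by (auto simp: bH_def intro!: r_into_rtranclp)
  show "\<not> (\<exists>(W :: nat set) \<kappa>. weight_fun W \<kappa> \<and> nontrivial_graph W \<kappa> \<and>
          graph_factor W \<kappa> {0,1} aG \<and> graph_factor W \<kappa> {0,1} bH)"
    using no_common by blast
  show "\<not> weakly_disjoint {0,1} aG {0,1} bH"
  proof
    assume "weakly_disjoint {0,1} aG {0,1} bH"
    then have "degree ({0,1} \<times> {0,1}) gJ (1,0) = degree {0,1} aG 1 * degree {0,1} bH 0"
      using joining unfolding weakly_disjoint_def by blast
    then show False
      unfolding degG degH by (simp add: prod01 degree_def sum4 gJ_def idx_def)
  qed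
qed

end
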